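(* Let $G$ be a finite group with $K(G)>1$ and $Z_2>Z(G)$, and write $K=K(G)$. Then the following are equivalent: (1) $Z_K>Z(G)$; (2) there exists $g\in G$ with $[g,G]=K$; (3) $K=[Z_K,G]$.
   Context: For $\chi\in\mathrm{Irr}(G)$, the center of $\chi$ is $Z(\chi)=\{g\in G : |\chi(g)|=\chi(1)\}$. For a nonabelian group $G$, let $\mathcal{X}=\{\chi\in\mathrm{Irr}(G) : Z(\chi)>Z(G)\}$ (strict containment) and define $K(G)=\bigcap_{\chi\in\mathcal{X}}\ker(\chi)$; if $G$ is abelian, set $K(G)=G$. $Z_2$ is defined by $Z_2/Z(G)=Z(G/Z(G))$; for a normal subgroup $N$, $Z_N$ is defined by $Z_N/N=Z(G/N)$. For $g\in G$, $[g,G]$ is the subgroup generated by $\{[g,x]:x\in G\}$. *)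

theory Defs
  imports "HOL-Algebra.Algebra" "Jordan_Normal_Form.Matrix"
begin

definition grp_center :: "('g, 'b) monoid_scheme \<Rightarrow> 'g set" where
  "grp_center G = {z \<in> carrier G. \<forall>x \<in> carrier G. z \<otimes>\<^bsub>G\<^esub> x = x \<otimes>\<^bsub>G\<^esub> z}"

definition upper_Z :: "('g, 'b) monoid_scheme \<Rightarrow> 'g set \<Rightarrow> 'g set" where
  "upper_Z G N = {g \<in> carrier G. N #>\<^bsub>G\<^esub> g \<in> grp_center (G Mod N)}"

definition gcomm :: "('g, 'b) monoid_scheme \<Rightarrow> 'g \<Rightarrow> 'g \<Rightarrow> 'g" where
  "gcomm G g x = inv\<^bsub>G\<^esub> g \<otimes>\<^bsub>G\<^esub> inv\<^bsub>G\<^esub> x \<otimes>\<^bsub>G\<^esub> g \<otimes>\<^bsub>G\<^esub> x"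

definition elem_comm :: "('g, 'b) monoid_scheme \<Rightarrow> 'g \<Rightarrow> 'g set" where
  "elem_comm G g = generate G {gcomm G g x | x. x \<in> carrier G}"

definition set_comm :: "('g, 'b) monoid_scheme \<Rightarrow> 'g set \<Rightarrow> 'g set" where
  "set_comm G H = generate G {gcomm G h x | h x. h \<in> H \<and> x \<in> carrier G}"

definition is_rep :: "('g, 'b) monoid_scheme \<Rightarrow> nat \<Rightarrow> ('g \<Rightarrow> complex mat) \<Rightarrow> bool" where
  "is_rep G n \<rho> \<longleftrightarrow>
     (\<forall>g \<in> carrier G. \<rho> g \<in> carrier_mat n n) \<and>
     \<rho> \<one>\<^bsub>G\<^esub> = 1\<^sub>m n \<and>
     (\<forall>x \<in> carrier G. \<forall>y \<in> carrier G. \<rho> (x \<otimes>\<^bsub>G\<^esub> y) = \<rho> x * \<rho> y)"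

definition invariant_subspace :: "('g, 'b) monoid_scheme \<Rightarrow> nat \<Rightarrow> ('g \<Rightarrow> complex mat) \<Rightarrow> complex vec set \<Rightarrow> bool" where
  "invariant_subspace G n \<rho> W \<longleftrightarrow>
     W \<subseteq> carrier_vec n \<and> 0\<^sub>v n \<in> W \<and>
     (\<forall>v \<in> W. \<forall>w \<in> W. v + w \<in> W) \<and>
     (\<forall>c. \<forall>v \<in> W. c \<cdot>\<^sub>v v \<in> W) \<and>
     (\<forall>g \<in> carrier G. \<forall>v \<in> W. \<rho> g *\<^sub>v v \<in> W)"

definition irr_rep :: "('g, 'b) monoid_scheme \<Rightarrow> nat \<Rightarrow> ('g \<Rightarrow> complex mat) \<Rightarrow> bool" where
  "irr_rep G n \<rho> \<longleftrightarrow> is_rep G n \<rho> \<and> n > 0 \<and>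
     \<not> (\<exists>W. invariant_subspace G n \<rho> W \<and> W \<noteq> {0\<^sub>v n} \<and> W \<noteq> carrier_vec n)"

definition rep_char :: "('g, 'b) monoid_scheme \<Rightarrow> nat \<Rightarrow> ('g \<Rightarrow> complex mat) \<Rightarrow> 'g \<Rightarrow> complex" where
  "rep_char G n \<rho> g = (if g \<in> carrier G then (\<Sum>i<n. \<rho> g $$ (i, i)) else 0)"

definition Irr :: "('g, 'b) monoid_scheme \<Rightarrow> ('g \<Rightarrow> complex) set" where
  "Irr G = {rep_char G n \<rho> | n \<rho>. irr_rep G n \<rho>}"

definition char_ker :: "('g, 'b) monoid_scheme \<Rightarrow> ('g \<Rightarrow> complex) \<Rightarrow> 'g set" where
  "char_ker G \<chi> = {g \<in> carrier G. \<chi> g = \<chi> \<one>\<^bsub>G\<^esub>}"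

definition char_center :: "('g, 'b) monoid_scheme \<Rightarrow> ('g \<Rightarrow> complex) \<Rightarrow> 'g set" where
  "char_center G \<chi> = {g \<in> carrier G. cmod (\<chi> g) = cmod (\<chi> \<one>\<^bsub>G\<^esub>)}"

definition K_grp :: "('g, 'b) monoid_scheme \<Rightarrow> 'g set" where
  "K_grp G = (if grp_center G = carrier G then carrier G
     else carrier G \<inter> \<Inter> {char_ker G \<chi> | \<chi>. \<chi> \<in> Irr G \<and> grp_center G \<subset> char_center G \<chi>})"

end

theory Submission
  imports Defs "Jordan_Normal_Form.Jordan_Normal_Form_Existence" "Jordan_Normal_Form.Spectral_Radius" "Jordan_Normal_Form.VS_Connect"
begin

definition mtr :: "'a::comm_ring_1 mat \<Rightarrow> 'a" where
  "mtr A = (\<Sum>i<dim_row A. A $$ (i,i))"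

lemma mtr_mult_comm:
  fixes A B :: "'a::comm_ring_1 mat"
  assumes A: "A \<in> carrier_mat n m" and B: "B \<in> carrier_mat m n"
  shows "mtr (A * B) = mtr (B * A)"
proof -
  have "mtr (A*B) = (\<Sum>i<n. \<Sum>j<m. A$$(i,j) * B$$(j,i))"
    using A B by (simp add: mtr_def scalar_prod_def lessThan_atLeast0)
  also have "\<dots> = (\<Sum>j<m. \<Sum>i<n. B$$(j,i) * A$$(i,j))"
    by (subst sum.swap) (simp add: mult.commute)
  also have "\<dots> = mtr (B*A)"
    using A B by (simp add: mtr_def scalar_prod_def lessThan_atLeast0)
  finally show ?thesis .
qed

lemma sum_lessThan_add_split:
  fixes a b :: nat
  shows "(\<Sum>i<a+b. f i) = (\<Sum>i<a. f i) + (\<Sum>i<b. f (a+i))"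
  by (induct b) (auto simp: add.assoc)

lemma mtr_diag_block_mat:
  assumes "Ball (set Bs) square_mat"
  shows "mtr (diag_block_mat Bs) = sum_list (map mtr Bs)"
  using assms
proof (induct Bs)
  case Nil
  then show ?case by (simp add: mtr_def)
next
  case (Cons A As)
  let ?D = "diag_block_mat As"
  have sqD: "square_mat ?D" using Cons diag_block_mat_square by auto
  have sqA: "dim_col A = dim_row A" using Cons by auto
  have "mtr (diag_block_mat (A # As)) =
    (\<Sum>i<dim_row A + dim_row ?D. four_block_mat A (0\<^sub>m (dim_row A) (dim_col ?D)) (0\<^sub>m (dim_row ?D) (dim_col A)) ?D $$ (i,i))"
    by (simp add: mtr_def Let_def)
  also have "\<dots> = (\<Sum>i<dim_row A. A $$ (i,i)) + (\<Sum>i<dim_row ?D. ?D $$ (i,i))"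
    unfolding sum_lessThan_add_split using sqD sqA
    by (intro arg_cong2[where f="(+)"] sum.cong) auto
  also have "\<dots> = mtr A + mtr ?D" by (simp add: mtr_def)
  finally show ?case using Cons by simp
qed

lemma diag_block_mat_one_blocks:
  assumes "Ball (set Bs) square_mat"
    and "diag_block_mat Bs = 1\<^sub>m (sum_list (map dim_row Bs))"
    and "B \<in> set Bs"
  shows "B = 1\<^sub>m (dim_row B)"
  using assms
proof (induct Bs)
  case Nil
  then show ?case by simp
next
  case (Cons A As)
  let ?D = "diag_block_mat As"
  have sqD: "square_mat ?D" using Cons diag_block_mat_square by auto
  have dD: "dim_row ?D = sum_list (map dim_row As)" by (simp add: dim_diag_block_mat)
  have sqA: "dim_col A = dim_row A" using Cons by auto
  let ?F = "four_block_mat A (0\<^sub>m (dim_row A) (dim_col ?D)) (0\<^sub>m (dim_row ?D) (dim_col A)) ?D"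
  have F: "?F = 1\<^sub>m (dim_row A + dim_row ?D)" using Cons(3) dD by (simp add: Let_def)
  have A1: "A = 1\<^sub>m (dim_row A)"
  proof (rule eq_matI)
    fix i j assume ij: "i < dim_row (1\<^sub>m (dim_row A))" "j < dim_col (1\<^sub>m (dim_row A))"
    have "?F $$ (i,j) = 1\<^sub>m (dim_row A + dim_row ?D) $$ (i,j)" using F by simp
    then show "A $$ (i,j) = 1\<^sub>m (dim_row A) $$ (i,j)" using ij sqA sqD by auto
  qed (use sqA in auto)
  have D1: "?D = 1\<^sub>m (dim_row ?D)"
  proof (rule eq_matI)
    fix i j assume ij: "i < dim_row (1\<^sub>m (dim_row ?D))" "j < dim_col (1\<^sub>m (dim_row ?D))"
    have "?F $$ (dim_row A + i, dim_row A + j) = 1\<^sub>m (dim_row A + dim_row ?D) $$ (dim_row A + i, dim_row A + j)"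
      using F by simp
    then show "?D $$ (i,j) = 1\<^sub>m (dim_row ?D) $$ (i,j)" using ij sqA sqD by auto
  qed (use sqD in auto)
  show ?case
  proof (cases "B = A")
    case True then show ?thesis using A1 by simp
  next
    case False
    then have "B \<in> set As" using Cons by auto
    then show ?thesis using Cons(1) Cons(2) D1 dD by auto
  qed
qed

lemma jordan_block_pow_one:
  fixes a :: complex
  assumes k: "k > 0" and m: "m > 0" and eq: "jordan_block k a ^\<^sub>m m = 1\<^sub>m k"
  shows "k = 1 \<and> a ^ m = 1"
proof -
  have e: "\<And>i j. i < k \<Longrightarrow> j < k \<Longrightarrow> (if i \<le> j then of_nat (m choose (j - i)) * a ^ (m + i - j) else 0) = (if i = j then 1 else (0::complex))"
  proof -
    fix i j assume "i < k" "j < k"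
    have "(jordan_block k a ^\<^sub>m m) $$ (i,j) = 1\<^sub>m k $$ (i,j)" using eq by simp
    then show "(if i \<le> j then of_nat (m choose (j - i)) * a ^ (m + i - j) else 0) = (if i = j then 1 else (0::complex))"
      using \<open>i < k\<close> \<open>j < k\<close> unfolding jordan_block_pow by simp
  qed
  have am: "a ^ m = 1" using e[of 0 0] k by simp
  moreover have "k = 1"
  proof (rule ccontr)
    assume "k \<noteq> 1"
    then have "1 < k" using k by auto
    then have "of_nat m * a ^ (m - 1) = (0::complex)" using e[of 0 1] by simp
    moreover have "a \<noteq> 0" using am m by (metis power_0_left less_not_refl2 zero_neq_one)
    ultimately show False using m by simp
  qed
  ultimately show ?thesis by simp
qed

lemma sum_list_unit_circle:
  fixes xs :: "complex list"
  assumes "\<forall>a\<in>set xs. cmod a = 1" and "sum_list xs = of_nat (length xs)"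
  shows "\<forall>a\<in>set xs. a = 1"
proof -
  have re_le: "\<forall>a\<in>set xs. Re a \<le> 1" using assms(1) by (metis abs_Re_le_cmod abs_le_D1)
  have "Re (sum_list xs) = sum_list (map Re xs)" by (induct xs) auto
  then have s: "sum_list (map Re xs) = of_nat (length xs)" using assms(2) by simp
  have "sum_list (map (\<lambda>a. 1 - Re a) xs) = real (length xs) - sum_list (map Re xs)"
    by (induct xs) auto
  then have "sum_list (map (\<lambda>a. 1 - Re a) xs) = 0" using s by simp
  then have "\<forall>a\<in>set xs. 1 - Re a = 0"
    using re_le by (subst (asm) sum_list_nonneg_eq_0_iff) auto
  then show ?thesis
  proof (intro ballI)
    fix a assume "\<forall>a\<in>set xs. 1 - Re a = 0" "a \<in> set xs"
    then have r: "Re a = 1" and c: "cmod a = 1" using assms(1) by auto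
    have "(cmod a)^2 = (Re a)^2 + (Im a)^2" by (simp add: cmod_power2)
    then have "Im a = 0" using r c by simp
    then show "a = 1" using r by (simp add: complex_eq_iff)
  qed
qed

lemma finite_order_trace:
  fixes A :: "complex mat"
  assumes A: "A \<in> carrier_mat n n" and m: "m > 0" and pow: "A ^\<^sub>m m = 1\<^sub>m n"
    and tr: "mtr A = of_nat n"
  shows "A = 1\<^sub>m n"
proof -
  obtain as where "char_poly A = (\<Prod>a\<leftarrow>as. [:- a, 1:])" using char_poly_factorized[OF A] by auto
  then obtain n_as where jnf: "jordan_nf A n_as" using jordan_nf_exists[OF A] by blast
  let ?J = "jordan_matrix n_as"
  have nz: "0 \<notin> fst ` set n_as" and "similar_mat A ?J" using jnf unfolding jordan_nf_def by auto
  then obtain P Q where sim: "similar_mat_wit A ?J P Q" unfolding similar_mat_def by blast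
  have dA: "dim_row A = n" using A by simp
  have J: "?J \<in> carrier_mat n n" and P: "P \<in> carrier_mat n n" and Q: "Q \<in> carrier_mat n n"
    and PQ: "P * Q = 1\<^sub>m n" and QP: "Q * P = 1\<^sub>m n" and AJ: "A = P * ?J * Q"
    using sim unfolding similar_mat_wit_def Let_def dA by auto
  have sumn: "sum_list (map fst n_as) = n" using J jordan_matrix_dim[of n_as] by auto
  have Jm: "?J ^\<^sub>m m \<in> carrier_mat n n" using J by simp
  have "A ^\<^sub>m m = P * ?J ^\<^sub>m m * Q" using similar_mat_wit_pow_id[OF sim] .
  then have "Q * (A ^\<^sub>m m) * P = Q * (P * ?J ^\<^sub>m m * Q) * P" by simp
  also have "\<dots> = (Q * P) * ?J ^\<^sub>m m * (Q * P)"
    using P Q Jm by (simp add: assoc_mult_mat[of _ n n _ n _ n])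
  also have "\<dots> = ?J ^\<^sub>m m" using QP Jm by (simp add: left_mult_one_mat right_mult_one_mat)
  finally have "?J ^\<^sub>m m = Q * P" using pow Q P by simp
  then have Jm1: "?J ^\<^sub>m m = 1\<^sub>m n" using QP by simp
  let ?Bs = "map (\<lambda>(k,a). jordan_block k a ^\<^sub>m m) n_as"
  have sq: "Ball (set ?Bs) square_mat" by auto
  have dimBs: "sum_list (map dim_row ?Bs) = n"
    using sumn by (simp add: o_def case_prod_beta')
  have DB: "diag_block_mat ?Bs = 1\<^sub>m (sum_list (map dim_row ?Bs))"
    using Jm1 dimBs unfolding jordan_matrix_pow by simp
  have blocks: "\<And>k a. (k,a) \<in> set n_as \<Longrightarrow> k = 1 \<and> a ^ m = 1"
  proof -
    fix k a assume ka: "(k,a) \<in> set n_as"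
    then have "jordan_block k a ^\<^sub>m m \<in> set ?Bs" by force
    from diag_block_mat_one_blocks[OF sq DB this]
    have "jordan_block k a ^\<^sub>m m = 1\<^sub>m k" by simp
    moreover have "k > 0" using nz ka by (metis fst_conv gr0I image_eqI)
    ultimately show "k = 1 \<and> a ^ m = 1" using jordan_block_pow_one m by blast
  qed
  have "mtr A = mtr (P * (?J * Q))" using AJ P Q J by (simp add: assoc_mult_mat[of _ n n _ n _ n])
  also have "\<dots> = mtr ((?J * Q) * P)" using P Q J by (intro mtr_mult_comm) auto
  also have "\<dots> = mtr ?J" using P Q J QP by (simp add: assoc_mult_mat[of _ n n _ n _ n] right_mult_one_mat)
  also have "\<dots> = sum_list (map mtr (map (\<lambda>(k,a). jordan_block k a) n_as))"
    unfolding jordan_matrix_def by (rule mtr_diag_block_mat) auto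
  also have "\<dots> = sum_list (map snd n_as)"
  proof -
    have "map mtr (map (\<lambda>(k,a). jordan_block k a) n_as) = map snd n_as"
      using blocks by (auto simp: mtr_def)
    then show ?thesis by (metis (no_types))
  qed
  finally have s1: "sum_list (map snd n_as) = of_nat n" using tr by simp
  have "map fst n_as = replicate (length n_as) 1"
  proof (rule nth_equalityI)
    fix i assume "i < length (map fst n_as)"
    then have "n_as ! i \<in> set n_as" by simp
    then show "map fst n_as ! i = replicate (length n_as) 1 ! i"
    proof -
      obtain k a where Pair: "n_as ! i = (k,a)" by (cases "n_as ! i") auto
      then have "k = 1" using blocks \<open>n_as ! i \<in> set n_as\<close> by auto
      then show ?thesis using Pair \<open>i < length (map fst n_as)\<close> by simp
    qed
  qed simp
  then have "sum_list (map fst n_as) = length n_as" by (simp add: sum_list_replicate)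
  then have "n = length n_as" using sumn by simp
  then have s2: "sum_list (map snd n_as) = of_nat (length (map snd n_as))" using s1 by simp
  have unit: "\<forall>a\<in>set (map snd n_as). cmod a = 1"
  proof
    fix a assume "a \<in> set (map snd n_as)"
    then obtain k where "(k,a) \<in> set n_as" by auto
    then have "a ^ m = 1" using blocks by auto
    then show "cmod a = 1" using m power_eq_1_iff by blast
  qed
  have all1: "\<forall>a\<in>set (map snd n_as). a = 1" using sum_list_unit_circle[OF unit s2] .
  have "map (\<lambda>(k,a). jordan_block k a) n_as = map (\<lambda>B. 1\<^sub>m (dim_row B)) (map (\<lambda>(k,a). jordan_block k a) n_as)"
  proof -
    have "\<And>k a. (k,a) \<in> set n_as \<Longrightarrow> jordan_block k a = 1\<^sub>m (dim_row (jordan_block k a))"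
    proof -
      fix k a assume ka: "(k,a) \<in> set n_as"
      then have "k = 1" "a = 1" using blocks all1 by force+
      then show "jordan_block k a = 1\<^sub>m (dim_row (jordan_block k a))"
        by (intro eq_matI) auto
    qed
    then show ?thesis by auto
  qed
  then have "?J = 1\<^sub>m (sum_list (map dim_row (map (\<lambda>(k,a). jordan_block k a) n_as)))"
    unfolding jordan_matrix_def by (metis diag_block_one_mat)
  also have "sum_list (map dim_row (map (\<lambda>(k,a). jordan_block k a) n_as)) = n"
    using sumn by (simp add: o_def case_prod_beta')
  finally have "?J = 1\<^sub>m n" .
  then show ?thesis using AJ P PQ by simp
qed

lemma adapted_basis:
  fixes W :: "complex vec set"
  assumes Wc: "W \<subseteq> carrier_vec d" and W0: "0\<^sub>v d \<in> W"
    and Wadd: "\<forall>v\<in>W. \<forall>w\<in>W. v + w \<in> W" and Wsm: "\<forall>c. \<forall>v\<in>W. c \<cdot>\<^sub>v v \<in> W"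
    and Wn0: "W \<noteq> {0\<^sub>v d}" and Wnall: "W \<noteq> carrier_vec d"
  shows "\<exists>P Q k. P \<in> carrier_mat d d \<and> Q \<in> carrier_mat d d \<and> P * Q = 1\<^sub>m d \<and> Q * P = 1\<^sub>m d
     \<and> 0 < k \<and> k < d \<and> (\<forall>j<k. col P j \<in> W) \<and> (\<forall>w\<in>W. \<forall>i. k \<le> i \<longrightarrow> i < d \<longrightarrow> (Q *\<^sub>v w) $ i = 0)"
proof -
  interpret V: vec_space "TYPE(complex)" d .
  have subm: "submodule class_ring W V.V"
    by (unfold_locales) (use Wc W0 Wadd Wsm in auto)
  have li_empty: "V.lin_indpt {}" unfolding V.lin_dep_def by auto
  have bound: "\<And>S. S \<subseteq> carrier_vec d \<and> V.lin_indpt S \<Longrightarrow> finite S \<and> card S \<le> d"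
    using V.li_le_dim V.fin_dim V.dim_is_n by (metis V.cV)
  obtain B where finB: "finite B" and maxB: "maximal B (\<lambda>S. S \<subseteq> W \<and> V.lin_indpt S)"
    using maximal_exists[where P="\<lambda>S. S \<subseteq> W \<and> V.lin_indpt S" and B="{}" and N=d] bound Wc li_empty
    by blast
  have BW: "B \<subseteq> W" and liB: "V.lin_indpt B" using maxB unfolding maximal_def by auto
  have Bc: "B \<subseteq> carrier_vec d" using BW Wc by auto
  have spanB: "V.span B = W"
  proof
    show "V.span B \<subseteq> W" using V.span_is_subset[OF BW subm] .
    show "W \<subseteq> V.span B"
    proof
      fix w assume w: "w \<in> W"
      show "w \<in> V.span B"
      proof (rule ccontr)
        assume nw: "w \<notin> V.span B"
        have "B \<subseteq> V.span B" using V.in_own_span Bc by auto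
        then have wB: "w \<notin> B" using nw by auto
        have wc: "w \<in> carrier_vec d" using w Wc by auto
        have "\<not> V.lin_dep (B \<union> {w})" using V.lin_dep_iff_in_span[of B w] Bc liB wc wB nw by auto
        then have "B \<union> {w} = B" using maxB w BW unfolding maximal_def by auto
        then show False using wB by auto
      qed
    qed
  qed
  obtain C where finC: "finite C" and maxC: "maximal C (\<lambda>S. B \<subseteq> S \<and> S \<subseteq> carrier_vec d \<and> V.lin_indpt S)"
    using maximal_exists[where P="\<lambda>S. B \<subseteq> S \<and> S \<subseteq> carrier_vec d \<and> V.lin_indpt S" and B=B and N=d] bound Bc liB
    by blast
  have BC: "B \<subseteq> C" and Cc: "C \<subseteq> carrier_vec d" and liC: "V.lin_indpt C" using maxC unfolding maximal_def by auto
  have "maximal C (\<lambda>S. S \<subseteq> carrier_vec d \<and> V.lin_indpt S)"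
    unfolding maximal_def
  proof (intro conjI allI impI)
    show "C \<subseteq> carrier_vec d" using Cc by simp
    show "V.lin_indpt C" using liC .
    fix T assume T: "C \<subseteq> T \<and> T \<subseteq> carrier_vec d \<and> V.lin_indpt T"
    then have "B \<subseteq> T \<and> T \<subseteq> carrier_vec d \<and> V.lin_indpt T" using BC by auto
    with T show "T = C" using maxC unfolding maximal_def by blast
  qed
  then have basC: "V.basis C" by (rule V.max_li_is_basis)
  have cardC: "card C = d" using V.dim_basis[OF finC basC] V.dim_is_n by simp
  have spanC: "V.span C = carrier_vec d" using basC unfolding V.basis_def by simp
  have Bne: "B \<noteq> {}"
  proof
    assume "B = {}"
    then have "W = {0\<^sub>v d}" using spanB V.span_empty by simp
    then show False using Wn0 by simp
  qed
  have cardB: "card B < d"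
  proof -
    have "card B \<le> card C" using BC finC by (simp add: card_mono)
    moreover have "card B \<noteq> card C"
    proof
      assume "card B = card C"
      then have "B = C" using BC finC by (simp add: card_subset_eq)
      then show False using spanB spanC Wnall by simp
    qed
    ultimately show ?thesis using cardC by simp
  qed
  obtain bs where bs: "set bs = B" "distinct bs" using finite_distinct_list[OF finB] by blast
  obtain cs where cs: "set cs = C - B" "distinct cs" using finite_distinct_list[of "C - B"] finC by blast
  define vs where "vs = bs @ cs"
  define k where "k = length bs"
  have vs_set: "set vs = C" using bs cs BC unfolding vs_def by auto
  have vs_dist: "distinct vs" using bs cs unfolding vs_def by auto
  have vs_len: "length vs = d" using distinct_card[OF vs_dist] vs_set cardC by simp
  have vs_c: "set vs \<subseteq> carrier_vec d" using vs_set Cc by simp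
  have kB: "k = card B" using distinct_card[OF bs(2)] bs(1) unfolding k_def by simp
  have k0: "0 < k" using kB Bne finB by (simp add: card_gt_0_iff)
  have kd: "k < d" using kB cardB by simp
  define P where "P = mat_of_cols d vs"
  have P: "P \<in> carrier_mat d d" unfolding P_def using mat_of_cols_carrier(1)[of d vs] vs_len by simp
  have colP: "\<And>j. j < d \<Longrightarrow> col P j = vs ! j"
  proof -
    fix j assume j: "j < d"
    then have "vs ! j \<in> carrier_vec d" using vs_c vs_len nth_mem by (metis subsetD)
    then show "col P j = vs ! j" unfolding P_def using j vs_len col_mat_of_cols by metis
  qed
  have "\<forall>i<d. \<exists>c. unit_vec d i = V.lincomb_list c vs"
  proof (intro allI impI)
    fix i assume "i < d"
    have "unit_vec d i \<in> V.span (set vs)" using spanC vs_set by simp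
    then have "unit_vec d i \<in> V.span_list vs" using V.span_list_as_span[OF vs_c] by simp
    then show "\<exists>c. unit_vec d i = V.lincomb_list c vs" by (elim V.in_span_listE) auto
  qed
  then obtain cf where cf: "\<And>i. i < d \<Longrightarrow> unit_vec d i = V.lincomb_list (cf i) vs" by metis
  define Q where "Q = mat d d (\<lambda>(l,i). cf i l)"
  have Q: "Q \<in> carrier_mat d d" unfolding Q_def by simp
  have PQ: "P * Q = 1\<^sub>m d"
  proof (rule eq_matI)
    fix r i assume ri: "r < dim_row (1\<^sub>m d)" "i < dim_col (1\<^sub>m d)"
    have colQ: "col Q i = vec d (cf i)" unfolding Q_def using ri by (auto simp: col_def)
    have "(P * Q) $$ (r,i) = col (P * Q) i $ r" using ri P Q by simp
    also have "\<dots> = (P *\<^sub>v vec d (cf i)) $ r" using P Q ri colQ by simp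
    also have "P *\<^sub>v vec d (cf i) = V.lincomb_list (cf i) vs"
    proof -
      have "\<forall>w\<in>set vs. dim_vec w = d" using vs_c by auto
      then show ?thesis unfolding P_def using V.lincomb_list_as_mat_mult[of vs "cf i"] vs_len by simp
    qed
    also have "\<dots> = unit_vec d i" using cf ri by simp
    finally show "(P * Q) $$ (r,i) = 1\<^sub>m d $$ (r,i)" using ri by simp
  qed (use P Q in auto)
  have QP: "Q * P = 1\<^sub>m d" using mat_mult_left_right_inverse[OF P Q PQ] .
  have colW: "\<forall>j<k. col P j \<in> W"
  proof (intro allI impI)
    fix j assume "j < k"
    then have "vs ! j = bs ! j" "j < d" unfolding vs_def k_def using kd k_def by (auto simp: nth_append)
    then show "col P j \<in> W" using colP bs BW \<open>j < k\<close> k_def by (metis nth_mem subsetD)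
  qed
  have zero: "\<forall>w\<in>W. \<forall>i. k \<le> i \<longrightarrow> i < d \<longrightarrow> (Q *\<^sub>v w) $ i = 0"
  proof (intro ballI allI impI)
    fix w i assume w: "w \<in> W" and i: "k \<le> i" "i < d"
    have bs_c: "set bs \<subseteq> carrier_vec d" using bs Bc by simp
    have "w \<in> V.span (set bs)" using spanB bs w by simp
    then have "w \<in> V.span_list bs" using V.span_list_as_span[OF bs_c] by simp
    then obtain c where wc: "w = V.lincomb_list c bs" by (elim V.in_span_listE) auto
    define c' where "c' = vec d (\<lambda>l. if l < k then c l else 0)"
    have c'c: "c' \<in> carrier_vec d" unfolding c'_def by simp
    have "w = mat_of_cols d bs *\<^sub>v vec k c"
    proof -
      have "\<forall>w\<in>set bs. dim_vec w = d" using bs_c by auto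
      then show ?thesis using wc V.lincomb_list_as_mat_mult[of bs c] unfolding k_def by simp
    qed
    also have "\<dots> = P *\<^sub>v c'"
    proof (rule eq_vecI)
      fix r assume "r < dim_vec (P *\<^sub>v c')"
      then have r: "r < d" using P by simp
      have "(P *\<^sub>v c') $ r = (\<Sum>l\<in>{0..<d}. P $$ (r,l) * c' $ l)"
        using P r c'c by (simp add: scalar_prod_def)
      also have "\<dots> = (\<Sum>l\<in>{0..<k}. P $$ (r,l) * c' $ l)"
        using kd unfolding c'_def by (intro sum.mono_neutral_right) auto
      also have "\<dots> = (\<Sum>l\<in>{0..<k}. (bs ! l) $ r * c l)"
      proof (rule sum.cong)
        fix l assume l: "l \<in> {0..<k}"
        then have ld: "l < length vs" using kd vs_len by simp
        have "P $$ (r,l) = vs ! l $ r" unfolding P_def mat_of_cols_def using r ld by simp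
        also have "vs ! l = bs ! l" using l unfolding vs_def k_def by (simp add: nth_append)
        finally show "P $$ (r,l) * c' $ l = (bs ! l) $ r * c l" using l kd unfolding c'_def by simp
      qed simp
      also have "\<dots> = (mat_of_cols d bs *\<^sub>v vec k c) $ r"
        using r unfolding k_def by (simp add: scalar_prod_def mat_of_cols_def)
      finally show "(mat_of_cols d bs *\<^sub>v vec k c) $ r = (P *\<^sub>v c') $ r" by simp
    qed (use P in auto)
    finally have "Q *\<^sub>v w = (Q * P) *\<^sub>v c'" using P Q c'c by simp
    also have "\<dots> = c'" using QP c'c by simp
    finally show "(Q *\<^sub>v w) $ i = 0" using i unfolding c'_def by simp
  qed
  show ?thesis using P Q PQ QP k0 kd colW zero by blast
qed

lemma is_rep_carrier: "is_rep G n \<rho> \<Longrightarrow> g \<in> carrier G \<Longrightarrow> \<rho> g \<in> carrier_mat n n"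
  unfolding is_rep_def by auto

lemma is_rep_mult: "is_rep G n \<rho> \<Longrightarrow> x \<in> carrier G \<Longrightarrow> y \<in> carrier G \<Longrightarrow> \<rho> (x \<otimes>\<^bsub>G\<^esub> y) = \<rho> x * \<rho> y"
  unfolding is_rep_def by auto

lemma is_rep_one: "is_rep G n \<rho> \<Longrightarrow> \<rho> \<one>\<^bsub>G\<^esub> = 1\<^sub>m n"
  unfolding is_rep_def by auto

lemma is_rep_pow:
  assumes "group G" "is_rep G n \<rho>" "g \<in> carrier G"
  shows "\<rho> (g [^]\<^bsub>G\<^esub> (k::nat)) = \<rho> g ^\<^sub>m k"
proof (induct k)
  case 0
  then show ?case using assms is_rep_one[OF assms(2)] is_rep_carrier[OF assms(2,3)] by simp
next
  case (Suc k)
  interpret group G by fact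
  have "\<rho> (g [^]\<^bsub>G\<^esub> Suc k) = \<rho> (g [^]\<^bsub>G\<^esub> k \<otimes>\<^bsub>G\<^esub> g)" by simp
  also have "\<dots> = \<rho> (g [^]\<^bsub>G\<^esub> k) * \<rho> g" using is_rep_mult[OF assms(2)] assms(3) by simp
  finally show ?case using Suc by simp
qed

lemma rep_char_mtr: "g \<in> carrier G \<Longrightarrow> is_rep G n \<rho> \<Longrightarrow> rep_char G n \<rho> g = mtr (\<rho> g)"
  unfolding rep_char_def mtr_def using is_rep_carrier by fastforce

lemma rep_char_one: "group G \<Longrightarrow> is_rep G n \<rho> \<Longrightarrow> rep_char G n \<rho> \<one>\<^bsub>G\<^esub> = of_nat n"
  unfolding rep_char_def using is_rep_one[of G n \<rho>] by (simp add: group.is_monoid monoid.one_closed)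

lemma rep_kernel_iff:
  assumes G: "group G" "finite (carrier G)" and r: "is_rep G n \<rho>" and g: "g \<in> carrier G"
  shows "rep_char G n \<rho> g = rep_char G n \<rho> \<one>\<^bsub>G\<^esub> \<longleftrightarrow> \<rho> g = 1\<^sub>m n"
proof
  interpret group G by fact
  assume h: "rep_char G n \<rho> g = rep_char G n \<rho> \<one>\<^bsub>G\<^esub>"
  have "mtr (\<rho> g) = of_nat n" using h rep_char_mtr[OF g r] rep_char_one[OF G(1) r] by simp
  moreover have "\<rho> g ^\<^sub>m ord g = 1\<^sub>m n"
    using is_rep_pow[OF G(1) r g, of "ord g"] g is_rep_one[OF r] by simp
  moreover have "ord g > 0" using ord_ge_1[OF G(2) g] by simp
  ultimately show "\<rho> g = 1\<^sub>m n" using finite_order_trace is_rep_carrier[OF r g] by blast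
next
  assume "\<rho> g = 1\<^sub>m n"
  then show "rep_char G n \<rho> g = rep_char G n \<rho> \<one>\<^bsub>G\<^esub>"
    using is_rep_one[OF r] g unfolding rep_char_def by (simp add: group.is_monoid[OF G(1)] monoid.one_closed)
qed

lemma rep_char_ker:
  assumes G: "group G" "finite (carrier G)" and r: "is_rep G n \<rho>"
  shows "char_ker G (rep_char G n \<rho>) = {g \<in> carrier G. \<rho> g = 1\<^sub>m n}"
  unfolding char_ker_def using rep_kernel_iff[OF G r] by auto

lemma rep_kernel_normal:
  fixes G (structure)
  assumes G: "group G" and r: "is_rep G n \<rho>"
  shows "normal {g \<in> carrier G. \<rho> g = 1\<^sub>m n} G"
proof -
  interpret group G by fact
  have inv1: "\<rho> (inv x) = 1\<^sub>m n" if "x \<in> carrier G" "\<rho> x = 1\<^sub>m n" for x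
  proof -
    have m: "\<rho> (x \<otimes> inv x) = \<rho> x * \<rho> (inv x)" by (rule is_rep_mult[OF r]) (use that in auto)
    have c: "\<rho> (inv x) \<in> carrier_mat n n" using is_rep_carrier[OF r] that by simp
    have e: "\<rho> (x \<otimes> inv x) = 1\<^sub>m n" using is_rep_one[OF r] that by simp
    have "\<rho> (inv x) = 1\<^sub>m n * \<rho> (inv x)" using c by simp
    also have "\<dots> = \<rho> x * \<rho> (inv x)" using that(2) by simp
    also have "\<dots> = 1\<^sub>m n" using m e by simp
    finally show ?thesis .
  qed
  have sub: "subgroup {g \<in> carrier G. \<rho> g = 1\<^sub>m n} G"
  proof (rule subgroupI)
    show "{g \<in> carrier G. \<rho> g = 1\<^sub>m n} \<noteq> {}" using is_rep_one[OF r] by auto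
  qed (use inv1 is_rep_mult[OF r] in auto)
  show ?thesis unfolding normal_inv_iff
  proof (intro conjI sub ballI)
    fix x h assume x: "x \<in> carrier G" and h: "h \<in> {g \<in> carrier G. \<rho> g = 1\<^sub>m n}"
    have "\<rho> (x \<otimes> h \<otimes> inv x) = \<rho> x * \<rho> h * \<rho> (inv x)" using is_rep_mult[OF r] x h by simp
    also have "\<dots> = \<rho> x * \<rho> (inv x)" using h is_rep_carrier[OF r x] by simp
    also have "\<dots> = \<rho> (x \<otimes> inv x)" by (rule is_rep_mult[OF r, symmetric]) (use x in auto)
    finally show "x \<otimes> h \<otimes> inv x \<in> {g \<in> carrier G. \<rho> g = 1\<^sub>m n}"
      using x h is_rep_one[OF r] by simp
  qed
qed

lemma schur_scalar:
  assumes irr: "irr_rep G n \<rho>" and C: "C \<in> carrier_mat n n"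
    and comm: "\<forall>x\<in>carrier G. C * \<rho> x = \<rho> x * C"
  shows "\<exists>c. C = c \<cdot>\<^sub>m 1\<^sub>m n"
proof -
  have r: "is_rep G n \<rho>" and n: "n > 0" using irr unfolding irr_rep_def by auto
  obtain lam where "eigenvalue C lam" using spectrum_non_empty[OF C n] unfolding spectrum_def by auto
  then obtain v where ev: "eigenvector C v lam" unfolding eigenvalue_def by auto
  have v: "v \<in> carrier_vec n" "v \<noteq> 0\<^sub>v n" "C *\<^sub>v v = lam \<cdot>\<^sub>v v" using ev C unfolding eigenvector_def by auto
  define W where "W = {w \<in> carrier_vec n. C *\<^sub>v w = lam \<cdot>\<^sub>v w}"
  have inv: "invariant_subspace G n \<rho> W"
    unfolding invariant_subspace_def
  proof (intro conjI ballI allI)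
    show "W \<subseteq> carrier_vec n" unfolding W_def by auto
    show "0\<^sub>v n \<in> W" unfolding W_def using C by auto
  next
    fix a b assume "a \<in> W" "b \<in> W"
    then show "a + b \<in> W" unfolding W_def using C
      by (auto simp: mult_add_distrib_mat_vec smult_add_distrib_vec)
  next
    fix c a assume "a \<in> W"
    then show "c \<cdot>\<^sub>v a \<in> W" unfolding W_def using C
      by (auto simp: mult_mat_vec smult_smult_assoc mult.commute)
  next
    fix g a assume g: "g \<in> carrier G" and a: "a \<in> W"
    have rg: "\<rho> g \<in> carrier_mat n n" using is_rep_carrier[OF r g] .
    have "C *\<^sub>v (\<rho> g *\<^sub>v a) = (C * \<rho> g) *\<^sub>v a" using C rg a unfolding W_def by simp
    also have "\<dots> = (\<rho> g * C) *\<^sub>v a" using comm g by simp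
    also have "\<dots> = \<rho> g *\<^sub>v (lam \<cdot>\<^sub>v a)" using C rg a unfolding W_def by simp
    also have "\<dots> = lam \<cdot>\<^sub>v (\<rho> g *\<^sub>v a)" using rg a mult_mat_vec unfolding W_def by auto
    finally show "\<rho> g *\<^sub>v a \<in> W" using rg a unfolding W_def by auto
  qed
  have "W \<noteq> {0\<^sub>v n}" using v unfolding W_def by auto
  then have Wall: "W = carrier_vec n" using irr inv unfolding irr_rep_def by blast
  have "C = lam \<cdot>\<^sub>m 1\<^sub>m n"
  proof (rule eq_matI)
    fix i j assume ij: "i < dim_row (lam \<cdot>\<^sub>m 1\<^sub>m n)" "j < dim_col (lam \<cdot>\<^sub>m 1\<^sub>m n)"
    have uW: "unit_vec n j \<in> W" using Wall by simp
    have "C $$ (i,j) = (C * 1\<^sub>m n) $$ (i,j)" using C by simp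
    also have "\<dots> = row C i \<bullet> col (1\<^sub>m n) j" using C ij by simp
    also have "\<dots> = row C i \<bullet> unit_vec n j" using ij by simp
    also have "\<dots> = (C *\<^sub>v unit_vec n j) $ i" using C ij by simp
    also have "\<dots> = (lam \<cdot>\<^sub>v unit_vec n j) $ i" using uW unfolding W_def by simp
    also have "\<dots> = (lam \<cdot>\<^sub>m 1\<^sub>m n) $$ (i,j)" using ij by simp
    finally show "C $$ (i,j) = (lam \<cdot>\<^sub>m 1\<^sub>m n) $$ (i,j)" .
  qed (use C in auto)
  then show ?thesis by blast
qed

lemma smult_one_pow: "(c \<cdot>\<^sub>m 1\<^sub>m n) ^\<^sub>m k = (c ^ k) \<cdot>\<^sub>m (1\<^sub>m n :: 'a::comm_ring_1 mat)"
proof (induct k)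
  case 0 then show ?case by (intro eq_matI) auto
next
  case (Suc k)
  have "(c \<cdot>\<^sub>m 1\<^sub>m n) ^\<^sub>m Suc k = ((c ^ k) \<cdot>\<^sub>m 1\<^sub>m n) * (c \<cdot>\<^sub>m 1\<^sub>m n)" using Suc by simp
  also have "\<dots> = (c ^ Suc k) \<cdot>\<^sub>m (1\<^sub>m n :: 'a mat)"
  proof (intro eq_matI)
    fix i j assume ij: "i < dim_row ((c ^ Suc k) \<cdot>\<^sub>m (1\<^sub>m n :: 'a mat))" "j < dim_col ((c ^ Suc k) \<cdot>\<^sub>m (1\<^sub>m n :: 'a mat))"
    have "(((c ^ k) \<cdot>\<^sub>m 1\<^sub>m n) * (c \<cdot>\<^sub>m 1\<^sub>m n)) $$ (i,j) = (\<Sum>l\<in>{0..<n}. c ^ k * (if l = i then 1 else 0) * (c * (if l = j then 1 else 0)))"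
      using ij by (simp add: scalar_prod_def)
    also have "\<dots> = (\<Sum>l\<in>{0..<n}. if l = i then (if i = j then c ^ k * c else 0) else 0)"
      by (rule sum.cong) auto
    also have "\<dots> = (if i = j then c ^ k * c else 0)" using ij by (simp add: sum.delta)
    finally show "(((c ^ k) \<cdot>\<^sub>m 1\<^sub>m n) * (c \<cdot>\<^sub>m 1\<^sub>m n)) $$ (i,j) = ((c ^ Suc k) \<cdot>\<^sub>m (1\<^sub>m n :: 'a mat)) $$ (i,j)"
      using ij by (simp add: mult.commute)
  qed auto
  finally show ?case .
qed

lemma schur_center:
  assumes G: "group G" "finite (carrier G)" and irr: "irr_rep G n \<rho>" and g: "g \<in> carrier G"
    and comm: "\<forall>x\<in>carrier G. \<rho> g * \<rho> x = \<rho> x * \<rho> g"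
  shows "g \<in> char_center G (rep_char G n \<rho>)"
proof -
  interpret group G by fact
  have r: "is_rep G n \<rho>" and n: "n > 0" using irr unfolding irr_rep_def by auto
  obtain c where c: "\<rho> g = c \<cdot>\<^sub>m 1\<^sub>m n" using schur_scalar[OF irr is_rep_carrier[OF r g] comm] by blast
  have "\<rho> g ^\<^sub>m ord g = 1\<^sub>m n"
    using is_rep_pow[OF G(1) r g, of "ord g"] g is_rep_one[OF r] by simp
  moreover have "\<rho> g ^\<^sub>m ord g = (c ^ ord g) \<cdot>\<^sub>m 1\<^sub>m n" unfolding c by (rule smult_one_pow)
  ultimately have "(c ^ ord g) \<cdot>\<^sub>m 1\<^sub>m n = 1\<^sub>m n" by simp
  then have "((c ^ ord g) \<cdot>\<^sub>m 1\<^sub>m n) $$ (0,0) = (1\<^sub>m n :: complex mat) $$ (0,0)" by simp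
  then have "c ^ ord g = 1" using n by simp
  moreover have "ord g > 0" using ord_ge_1[OF G(2) g] by simp
  ultimately have cm: "cmod c = 1" using power_eq_1_iff[of c "ord g"] by auto
  have "rep_char G n \<rho> g = (\<Sum>i<n. c)" unfolding rep_char_def using g c by simp
  also have "\<dots> = of_nat n * c" by simp
  finally have "cmod (rep_char G n \<rho> g) = cmod (of_nat n * c)" by simp
  also have "\<dots> = of_nat n" using cm by (simp add: norm_mult)
  finally have "cmod (rep_char G n \<rho> g) = of_nat n" .
  moreover have "cmod (rep_char G n \<rho> \<one>\<^bsub>G\<^esub>) = of_nat n" using rep_char_one[OF G(1) r] by simp
  ultimately show ?thesis unfolding char_center_def using g by simp
qed

lemma mult_index_sum:
  fixes A B :: "'a::comm_ring_1 mat"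
  assumes "A \<in> carrier_mat d d" "B \<in> carrier_mat d d" "i < d" "j < d"
  shows "(A * B) $$ (i,j) = (\<Sum>l<d. A $$ (i,l) * B $$ (l,j))"
  using assms by (simp add: scalar_prod_def lessThan_atLeast0)

lemma split_rep:
  assumes r: "is_rep G d \<rho>" and inv: "invariant_subspace G d \<rho> W"
    and W0: "W \<noteq> {0\<^sub>v d}" and Wa: "W \<noteq> carrier_vec d"
  shows "\<exists>k \<rho>1 \<rho>2. 0 < k \<and> k < d \<and> is_rep G k \<rho>1 \<and> is_rep G (d-k) \<rho>2 \<and>
    (\<forall>x\<in>carrier G. mtr (\<rho> x) = mtr (\<rho>1 x) + mtr (\<rho>2 x) \<and>
       (\<rho> x = 1\<^sub>m d \<longrightarrow> \<rho>1 x = 1\<^sub>m k \<and> \<rho>2 x = 1\<^sub>m (d-k)))"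
proof -
  have Wc: "W \<subseteq> carrier_vec d" and W0': "0\<^sub>v d \<in> W" and Wadd: "\<forall>v\<in>W. \<forall>w\<in>W. v + w \<in> W"
    and Wsm: "\<forall>c. \<forall>v\<in>W. c \<cdot>\<^sub>v v \<in> W" and Winv: "\<forall>g\<in>carrier G. \<forall>v\<in>W. \<rho> g *\<^sub>v v \<in> W"
    using inv unfolding invariant_subspace_def by auto
  obtain P Q k where P: "P \<in> carrier_mat d d" and Q: "Q \<in> carrier_mat d d" and PQ: "P * Q = 1\<^sub>m d"
    and QP: "Q * P = 1\<^sub>m d" and k0: "0 < k" and kd: "k < d" and colW: "\<forall>j<k. col P j \<in> W"
    and zero: "\<forall>w\<in>W. \<forall>i. k \<le> i \<longrightarrow> i < d \<longrightarrow> (Q *\<^sub>v w) $ i = 0"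
    using adapted_basis[OF Wc W0' Wadd Wsm W0 Wa] by blast
  have rc: "\<And>x. x \<in> carrier G \<Longrightarrow> \<rho> x \<in> carrier_mat d d" using r unfolding is_rep_def by auto
  have rm: "\<And>x y. x \<in> carrier G \<Longrightarrow> y \<in> carrier G \<Longrightarrow> \<rho> (x \<otimes>\<^bsub>G\<^esub> y) = \<rho> x * \<rho> y"
    using r unfolding is_rep_def by auto
  have r1: "\<rho> \<one>\<^bsub>G\<^esub> = 1\<^sub>m d" using r unfolding is_rep_def by auto
  define M where "M x = Q * \<rho> x * P" for x
  have Mc: "\<And>x. x \<in> carrier G \<Longrightarrow> M x \<in> carrier_mat d d" unfolding M_def using P Q rc by auto
  have PQX: "\<And>Mt. Mt \<in> carrier_mat d d \<Longrightarrow> P * (Q * Mt) = Mt"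
    using P Q PQ by (simp add: assoc_mult_mat[symmetric])
  have Mm: "\<And>x y. x \<in> carrier G \<Longrightarrow> y \<in> carrier G \<Longrightarrow> M (x \<otimes>\<^bsub>G\<^esub> y) = M x * M y"
  proof -
    fix x y assume x: "x \<in> carrier G" and y: "y \<in> carrier G"
    have "M x * M y = Q * (\<rho> x * (P * (Q * (\<rho> y * P))))"
      unfolding M_def using P Q rc[OF x] rc[OF y] by (simp add: assoc_mult_mat[of _ d d _ d _ d])
    also have "\<dots> = Q * (\<rho> x * (\<rho> y * P))" using PQX P rc[OF y] by simp
    also have "\<dots> = M (x \<otimes>\<^bsub>G\<^esub> y)"
      unfolding M_def using P Q rc[OF x] rc[OF y] rm[OF x y] by (simp add: assoc_mult_mat[of _ d d _ d _ d])
    finally show "M (x \<otimes>\<^bsub>G\<^esub> y) = M x * M y" by simp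
  qed
  have M1: "\<And>x. \<rho> x = 1\<^sub>m d \<Longrightarrow> M x = 1\<^sub>m d" unfolding M_def using P Q QP by simp
  have Mz: "\<And>x i j. x \<in> carrier G \<Longrightarrow> k \<le> i \<Longrightarrow> i < d \<Longrightarrow> j < k \<Longrightarrow> M x $$ (i,j) = 0"
  proof -
    fix x i j assume x: "x \<in> carrier G" and i: "k \<le> i" "i < d" and j: "j < k"
    have jd: "j < d" using j kd by simp
    have cW: "col P j \<in> W" using colW j by simp
    then have cc: "col P j \<in> carrier_vec d" using Wc by auto
    have "M x $$ (i,j) = col (M x) j $ i" using Mc[OF x] i jd by simp
    also have "col (M x) j = (Q * \<rho> x) *\<^sub>v col P j" unfolding M_def
      by (rule col_mult2) (use P Q rc[OF x] jd in auto)
    also have "\<dots> = Q *\<^sub>v (\<rho> x *\<^sub>v col P j)" using Q rc[OF x] cc by simp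
    finally show "M x $$ (i,j) = 0" using zero Winv x cW i by simp
  qed
  define \<rho>1 where "\<rho>1 x = mat k k (\<lambda>(i,j). M x $$ (i,j))" for x
  define \<rho>2 where "\<rho>2 x = mat (d-k) (d-k) (\<lambda>(i,j). M x $$ (k+i, k+j))" for x
  have dsplit: "d = k + (d - k)" using kd by simp
  have sumsplit: "\<And>f::nat \<Rightarrow> complex. (\<Sum>l<d. f l) = (\<Sum>l<k. f l) + (\<Sum>l<d-k. f (k+l))"
    by (subst (1) dsplit) (rule sum_lessThan_add_split)
  have rep1: "is_rep G k \<rho>1"
    unfolding is_rep_def
  proof (intro conjI ballI)
    show "\<rho>1 \<one>\<^bsub>G\<^esub> = 1\<^sub>m k" unfolding \<rho>1_def using M1[OF r1] kd by (intro eq_matI) auto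
  next
    fix x assume "x \<in> carrier G" then show "\<rho>1 x \<in> carrier_mat k k" unfolding \<rho>1_def by simp
  next
    fix x y assume x: "x \<in> carrier G" and y: "y \<in> carrier G"
    show "\<rho>1 (x \<otimes>\<^bsub>G\<^esub> y) = \<rho>1 x * \<rho>1 y"
    proof (rule eq_matI)
      fix i j assume ij: "i < dim_row (\<rho>1 x * \<rho>1 y)" "j < dim_col (\<rho>1 x * \<rho>1 y)"
      then have i: "i < k" and j: "j < k" unfolding \<rho>1_def by auto
      have "\<rho>1 (x \<otimes>\<^bsub>G\<^esub> y) $$ (i,j) = (M x * M y) $$ (i,j)" unfolding \<rho>1_def using i j Mm[OF x y] by simp
      also have "\<dots> = (\<Sum>l<d. M x $$ (i,l) * M y $$ (l,j))" using i j kd by (intro mult_index_sum Mc x y) auto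
      also have "\<dots> = (\<Sum>l<k. M x $$ (i,l) * M y $$ (l,j))"
        unfolding sumsplit using Mz[OF y] j kd by simp
      also have "\<dots> = (\<rho>1 x * \<rho>1 y) $$ (i,j)"
        unfolding \<rho>1_def using i j by (simp add: scalar_prod_def lessThan_atLeast0)
      finally show "\<rho>1 (x \<otimes>\<^bsub>G\<^esub> y) $$ (i,j) = (\<rho>1 x * \<rho>1 y) $$ (i,j)" .
    qed (auto simp: \<rho>1_def)
  qed
  have rep2: "is_rep G (d-k) \<rho>2"
    unfolding is_rep_def
  proof (intro conjI ballI)
    show "\<rho>2 \<one>\<^bsub>G\<^esub> = 1\<^sub>m (d-k)" unfolding \<rho>2_def using M1[OF r1] kd by (intro eq_matI) auto
  next
    fix x assume "x \<in> carrier G" then show "\<rho>2 x \<in> carrier_mat (d-k) (d-k)" unfolding \<rho>2_def by simp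
  next
    fix x y assume x: "x \<in> carrier G" and y: "y \<in> carrier G"
    show "\<rho>2 (x \<otimes>\<^bsub>G\<^esub> y) = \<rho>2 x * \<rho>2 y"
    proof (rule eq_matI)
      fix i j assume ij: "i < dim_row (\<rho>2 x * \<rho>2 y)" "j < dim_col (\<rho>2 x * \<rho>2 y)"
      then have i: "i < d-k" and j: "j < d-k" unfolding \<rho>2_def by auto
      have "\<rho>2 (x \<otimes>\<^bsub>G\<^esub> y) $$ (i,j) = (M x * M y) $$ (k+i,k+j)" unfolding \<rho>2_def using i j Mm[OF x y] by simp
      also have "\<dots> = (\<Sum>l<d. M x $$ (k+i,l) * M y $$ (l,k+j))" using i j kd by (intro mult_index_sum Mc x y) auto
      also have "\<dots> = (\<Sum>l<d-k. M x $$ (k+i,k+l) * M y $$ (k+l,k+j))"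
        unfolding sumsplit using Mz[OF x] i kd by simp
      also have "\<dots> = (\<rho>2 x * \<rho>2 y) $$ (i,j)"
        unfolding \<rho>2_def using i j by (simp add: scalar_prod_def lessThan_atLeast0)
      finally show "\<rho>2 (x \<otimes>\<^bsub>G\<^esub> y) $$ (i,j) = (\<rho>2 x * \<rho>2 y) $$ (i,j)" .
    qed (auto simp: \<rho>2_def)
  qed
  have tr: "\<And>x. x \<in> carrier G \<Longrightarrow> mtr (\<rho> x) = mtr (\<rho>1 x) + mtr (\<rho>2 x)"
  proof -
    fix x assume x: "x \<in> carrier G"
    have "mtr (M x) = mtr (Q * (\<rho> x * P))" unfolding M_def using P Q rc[OF x] by (simp add: assoc_mult_mat[of _ d d _ d _ d])
    also have "\<dots> = mtr ((\<rho> x * P) * Q)" using P Q rc[OF x] by (intro mtr_mult_comm) auto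
    also have "\<dots> = mtr (\<rho> x)" using P Q rc[OF x] PQ by (simp add: assoc_mult_mat[of _ d d _ d _ d])
    finally have e: "mtr (M x) = mtr (\<rho> x)" .
    have "mtr (M x) = (\<Sum>i<d. M x $$ (i,i))" using Mc[OF x] by (simp add: mtr_def)
    also have "\<dots> = (\<Sum>i<k. M x $$ (i,i)) + (\<Sum>i<d-k. M x $$ (k+i,k+i))" by (rule sumsplit)
    also have "\<dots> = mtr (\<rho>1 x) + mtr (\<rho>2 x)" unfolding \<rho>1_def \<rho>2_def mtr_def by simp
    finally show "mtr (\<rho> x) = mtr (\<rho>1 x) + mtr (\<rho>2 x)" using e by simp
  qed
  have ker: "\<And>x. \<rho> x = 1\<^sub>m d \<Longrightarrow> \<rho>1 x = 1\<^sub>m k \<and> \<rho>2 x = 1\<^sub>m (d-k)"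
  proof -
    fix x assume "\<rho> x = 1\<^sub>m d"
    then have "M x = 1\<^sub>m d" by (rule M1)
    then show "\<rho>1 x = 1\<^sub>m k \<and> \<rho>2 x = 1\<^sub>m (d-k)" unfolding \<rho>1_def \<rho>2_def
      using kd by (intro conjI eq_matI) auto
  qed
  show ?thesis using k0 kd rep1 rep2 tr ker by blast
qed

lemma irr_exists:
  assumes N: "N \<subseteq> carrier G" and h: "h \<in> carrier G"
    and "is_rep G d \<rho>" "d > 0" "\<forall>n\<in>N. \<rho> n = 1\<^sub>m d" "mtr (\<rho> h) \<noteq> of_nat d"
  shows "\<exists>d \<rho>. irr_rep G d \<rho> \<and> (\<forall>n\<in>N. \<rho> n = 1\<^sub>m d) \<and> mtr (\<rho> h) \<noteq> of_nat d"
  using assms(3-)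
proof (induct d arbitrary: \<rho> rule: less_induct)
  case (less d \<rho>)
  show ?case
  proof (cases "irr_rep G d \<rho>")
    case True
    then show ?thesis using less by blast
  next
    case False
    then obtain W where W: "invariant_subspace G d \<rho> W" "W \<noteq> {0\<^sub>v d}" "W \<noteq> carrier_vec d"
      using less unfolding irr_rep_def by blast
    obtain k \<rho>1 \<rho>2 where k: "0 < k" "k < d" and r1: "is_rep G k \<rho>1" and r2: "is_rep G (d-k) \<rho>2"
      and sp: "\<forall>x\<in>carrier G. mtr (\<rho> x) = mtr (\<rho>1 x) + mtr (\<rho>2 x) \<and>
       (\<rho> x = 1\<^sub>m d \<longrightarrow> \<rho>1 x = 1\<^sub>m k \<and> \<rho>2 x = 1\<^sub>m (d-k))"
      using split_rep[OF less(2) W] by blast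
    have ker1: "\<forall>n\<in>N. \<rho>1 n = 1\<^sub>m k" and ker2: "\<forall>n\<in>N. \<rho>2 n = 1\<^sub>m (d-k)"
      using sp less(4) N by auto
    have "mtr (\<rho>1 h) \<noteq> of_nat k \<or> mtr (\<rho>2 h) \<noteq> of_nat (d-k)"
    proof (rule ccontr)
      assume "\<not> ?thesis"
      then have "mtr (\<rho> h) = of_nat k + of_nat (d-k)" using sp h by simp
      also have "\<dots> = of_nat d" using k by (simp flip: of_nat_add)
      finally show False using less(5) by simp
    qed
    then show ?thesis
    proof
      assume "mtr (\<rho>1 h) \<noteq> of_nat k"
      then show ?thesis using less(1)[OF k(2) r1 k(1) ker1] by blast
    next
      assume "mtr (\<rho>2 h) \<noteq> of_nat (d-k)"
      then show ?thesis using less(1)[of "d-k" \<rho>2] k r2 ker2 by auto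
    qed
  qed
qed

lemma perm_rep:
  fixes G (structure)
  assumes grp: "group G" and fin: "finite (carrier G)" and nN: "normal N G"
    and h: "h \<in> carrier G" and hN: "h \<notin> N"
  shows "\<exists>d \<rho>. is_rep G d \<rho> \<and> d > 0 \<and> (\<forall>n\<in>N. \<rho> n = 1\<^sub>m d) \<and> mtr (\<rho> h) \<noteq> of_nat d"
proof -
  interpret group G by fact
  have sub: "subgroup N G" using nN normal_imp_subgroup by blast
  have Nc: "N \<subseteq> carrier G" using sub subgroup.subset by blast
  have RcE: "\<And>C. C \<in> rcosets N \<Longrightarrow> \<exists>a\<in>carrier G. C = N #> a" unfolding RCOSETS_def by auto
  have Rc: "\<And>C. C \<in> rcosets N \<Longrightarrow> C \<subseteq> carrier G" using RcE r_coset_subset_G Nc by blast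
  have finR: "finite (rcosets N)"
  proof -
    have "rcosets N \<subseteq> Pow (carrier G)" using Rc by auto
    then show ?thesis using fin finite_subset by blast
  qed
  obtain cs where cs: "set cs = rcosets N" "distinct cs" using finite_distinct_list[OF finR] by blast
  define d where "d = length cs"
  have Rx: "\<And>C x. C \<in> rcosets N \<Longrightarrow> x \<in> carrier G \<Longrightarrow> C #> x \<in> rcosets N"
  proof -
    fix C x assume C: "C \<in> rcosets N" and x: "x \<in> carrier G"
    then obtain a where a: "a \<in> carrier G" "C = N #> a" using RcE by blast
    then have "C #> x = N #> (a \<otimes> x)" using coset_mult_assoc Nc x by simp
    then show "C #> x \<in> rcosets N" using rcosetsI Nc a x by simp
  qed
  have Rassoc: "\<And>C x y. C \<in> rcosets N \<Longrightarrow> x \<in> carrier G \<Longrightarrow> y \<in> carrier G \<Longrightarrow> (C #> x) #> y = C #> (x \<otimes> y)"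
    using coset_mult_assoc Rc by blast
  have R1: "\<And>C. C \<in> rcosets N \<Longrightarrow> C #> \<one> = C" using Rc by simp
  have Rn: "\<And>C n. C \<in> rcosets N \<Longrightarrow> n \<in> N \<Longrightarrow> C #> n = C"
  proof -
    fix C n assume C: "C \<in> rcosets N" and n: "n \<in> N"
    then obtain a where a: "a \<in> carrier G" "C = N #> a" using RcE by blast
    have nc: "n \<in> carrier G" using n Nc by auto
    have "C #> n = N #> (a \<otimes> n)" using a coset_mult_assoc Nc nc by simp
    moreover have "a \<otimes> n \<in> N #> a"
    proof -
      have m: "a \<otimes> n \<otimes> inv a \<in> N" using normal.inv_op_closed2[OF nN a(1) n] .
      have "(a \<otimes> n \<otimes> inv a) \<otimes> a \<in> N #> a" using rcosI[OF m Nc a(1)] .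
      moreover have "(a \<otimes> n \<otimes> inv a) \<otimes> a = a \<otimes> n" using a nc by (simp add: m_assoc)
      ultimately show ?thesis by simp
    qed
    then have "N #> a = N #> (a \<otimes> n)" using repr_independence a(1) sub by blast
    ultimately show "C #> n = C" using a by simp
  qed
  have csR: "\<And>i. i < d \<Longrightarrow> cs ! i \<in> rcosets N" using cs unfolding d_def by (metis nth_mem)
  have idx: "\<And>C. C \<in> rcosets N \<Longrightarrow> \<exists>j<d. cs ! j = C" using cs unfolding d_def by (metis in_set_conv_nth)
  have inj: "\<And>i j. i < d \<Longrightarrow> j < d \<Longrightarrow> cs ! i = cs ! j \<longleftrightarrow> i = j"
    using cs(2) unfolding d_def by (simp add: nth_eq_iff_index_eq)
  define \<rho> :: "'a \<Rightarrow> complex mat" where "\<rho> y = mat d d (\<lambda>(i,j). if cs ! i #> y = cs ! j then 1 else 0)" for y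
  have rho_triv: "\<And>y. (\<forall>i<d. cs ! i #> y = cs ! i) \<Longrightarrow> \<rho> y = 1\<^sub>m d"
  proof -
    fix y assume "\<forall>i<d. cs ! i #> y = cs ! i"
    then show "\<rho> y = 1\<^sub>m d" unfolding \<rho>_def using inj by (intro eq_matI) auto
  qed
  have rep: "is_rep G d \<rho>"
    unfolding is_rep_def
  proof (intro conjI ballI)
    fix g show "\<rho> g \<in> carrier_mat d d" unfolding \<rho>_def by simp
  next
    show "\<rho> \<one> = 1\<^sub>m d" using rho_triv R1 csR by simp
  next
    fix x y assume x: "x \<in> carrier G" and y: "y \<in> carrier G"
    show "\<rho> (x \<otimes> y) = \<rho> x * \<rho> y"
    proof (rule eq_matI)
      fix i j assume ij: "i < dim_row (\<rho> x * \<rho> y)" "j < dim_col (\<rho> x * \<rho> y)"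
      then have i: "i < d" and j: "j < d" unfolding \<rho>_def by auto
      obtain l0 where l0: "l0 < d" "cs ! l0 = cs ! i #> x" using idx Rx csR i x by blast
      have "(\<rho> x * \<rho> y) $$ (i,j) = (\<Sum>l\<in>{0..<d}. (if cs ! i #> x = cs ! l then 1 else 0) * (if cs ! l #> y = cs ! j then 1 else (0::complex)))"
        using i j unfolding \<rho>_def by (simp add: scalar_prod_def)
      also have "\<dots> = (\<Sum>l\<in>{0..<d}. if l = l0 then (if cs ! l0 #> y = cs ! j then 1 else (0::complex)) else 0)"
      proof (rule sum.cong)
        fix l assume "l \<in> {0..<d}"
        then have "cs ! i #> x = cs ! l \<longleftrightarrow> l = l0" using l0 inj by auto
        then show "(if cs ! i #> x = cs ! l then 1 else 0) * (if cs ! l #> y = cs ! j then 1 else (0::complex)) =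
          (if l = l0 then (if cs ! l0 #> y = cs ! j then 1 else (0::complex)) else 0)" by auto
      qed simp
      also have "\<dots> = (if cs ! l0 #> y = cs ! j then 1 else 0)" using l0 by (simp add: sum.delta)
      also have "cs ! l0 #> y = cs ! i #> (x \<otimes> y)" using l0 Rassoc csR i x y by simp
      finally show "\<rho> (x \<otimes> y) $$ (i,j) = (\<rho> x * \<rho> y) $$ (i,j)" unfolding \<rho>_def using i j by simp
    qed (auto simp: \<rho>_def)
  qed
  have NR: "N \<in> rcosets N" using rcosetsI[OF Nc one_closed] Nc by simp
  then obtain i0 where i0: "i0 < d" "cs ! i0 = N" using idx by blast
  have d0: "d > 0" using i0 by simp
  have ker: "\<forall>n\<in>N. \<rho> n = 1\<^sub>m d" using rho_triv Rn csR by simp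
  have Nh: "N #> h \<noteq> N" using rcos_self[OF h sub] hN by auto
  have "mtr (\<rho> h) = (\<Sum>i<d. if cs ! i #> h = cs ! i then 1 else (0::complex))"
    unfolding \<rho>_def mtr_def by simp
  also have "\<dots> = of_nat (card {i\<in>{..<d}. cs ! i #> h = cs ! i})"
    by (simp add: sum.If_cases Int_def)
  finally have tr: "mtr (\<rho> h) = of_nat (card {i\<in>{..<d}. cs ! i #> h = cs ! i})" .
  have "{i\<in>{..<d}. cs ! i #> h = cs ! i} \<subseteq> {..<d} - {i0}" using i0 Nh by auto
  then have "card {i\<in>{..<d}. cs ! i #> h = cs ! i} \<le> card ({..<d} - {i0})" by (intro card_mono) auto
  also have "\<dots> = d - 1" using i0 by simp
  finally have "card {i\<in>{..<d}. cs ! i #> h = cs ! i} \<noteq> d" using d0 by linarith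
  then have "mtr (\<rho> h) \<noteq> of_nat d" unfolding tr by simp
  then show ?thesis using rep d0 ker by blast
qed

context group
begin

lemma inv_cancel_left2: "x \<in> carrier G \<Longrightarrow> y \<in> carrier G \<Longrightarrow> x \<otimes> (inv x \<otimes> y) = y"
  by (simp add: m_assoc[symmetric])

lemma inv_cancel_left3: "x \<in> carrier G \<Longrightarrow> y \<in> carrier G \<Longrightarrow> inv x \<otimes> (x \<otimes> y) = y"
  by (simp add: m_assoc[symmetric])

lemma gcomm_alt: "g \<in> carrier G \<Longrightarrow> x \<in> carrier G \<Longrightarrow> gcomm G g x = inv (x \<otimes> g) \<otimes> (g \<otimes> x)"
  unfolding gcomm_def by (simp add: inv_mult_group m_assoc)

lemma gcomm_closed: "g \<in> carrier G \<Longrightarrow> x \<in> carrier G \<Longrightarrow> gcomm G g x \<in> carrier G"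
  unfolding gcomm_def by simp

lemma gcomm_one_iff: "g \<in> carrier G \<Longrightarrow> x \<in> carrier G \<Longrightarrow> gcomm G g x = \<one> \<longleftrightarrow> g \<otimes> x = x \<otimes> g"
proof -
  assume g: "g \<in> carrier G" and x: "x \<in> carrier G"
  have "gcomm G g x = \<one> \<longleftrightarrow> inv (x \<otimes> g) \<otimes> (g \<otimes> x) = \<one>" using gcomm_alt g x by simp
  also have "\<dots> \<longleftrightarrow> g \<otimes> x = x \<otimes> g"
  proof
    assume e: "inv (x \<otimes> g) \<otimes> (g \<otimes> x) = \<one>"
    have "g \<otimes> x = (x \<otimes> g) \<otimes> (inv (x \<otimes> g) \<otimes> (g \<otimes> x))" using g x by (simp add: inv_cancel_left2)
    then show "g \<otimes> x = x \<otimes> g" using e g x by simp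
  next
    assume "g \<otimes> x = x \<otimes> g"
    then show "inv (x \<otimes> g) \<otimes> (g \<otimes> x) = \<one>" using g x by simp
  qed
  finally show ?thesis .
qed

lemma center_gcomm: "z \<in> grp_center G \<Longrightarrow> x \<in> carrier G \<Longrightarrow> gcomm G z x = \<one>"
  unfolding grp_center_def using gcomm_one_iff by auto

lemma notcenter_gcomm: "g \<in> carrier G \<Longrightarrow> g \<notin> grp_center G \<Longrightarrow> \<exists>x\<in>carrier G. gcomm G g x \<noteq> \<one>"
  unfolding grp_center_def using gcomm_one_iff by auto

lemma gcomm_conj:
  assumes g: "g \<in> carrier G" and x: "x \<in> carrier G" and y: "y \<in> carrier G"
  shows "y \<otimes> gcomm G g x \<otimes> inv y = inv (gcomm G g (inv y)) \<otimes> gcomm G g (x \<otimes> inv y)"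
  using g x y unfolding gcomm_def
  by (simp add: inv_mult_group m_assoc inv_cancel_left2 inv_cancel_left3)

lemma elem_comm_normal:
  assumes g: "g \<in> carrier G"
  shows "normal (elem_comm G g) G"
proof -
  let ?S = "{gcomm G g x | x. x \<in> carrier G}"
  let ?N = "elem_comm G g"
  have Sc: "?S \<subseteq> carrier G" using gcomm_closed g by auto
  have sub: "subgroup ?N G" unfolding elem_comm_def using generate_is_subgroup[OF Sc] .
  define T where "T = {z \<in> carrier G. \<forall>y\<in>carrier G. y \<otimes> z \<otimes> inv y \<in> ?N}"
  have subT: "subgroup T G"
  proof (rule subgroupI)
    show "T \<subseteq> carrier G" unfolding T_def by auto
    show "T \<noteq> {}" unfolding T_def using subgroup.one_closed[OF sub] by auto
  next
    fix a assume a: "a \<in> T"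
    show "inv a \<in> T" unfolding T_def
    proof (intro CollectI conjI ballI)
      show "inv a \<in> carrier G" using a unfolding T_def by auto
      fix y assume y: "y \<in> carrier G"
      have ac: "a \<in> carrier G" using a unfolding T_def by auto
      have "y \<otimes> inv a \<otimes> inv y = inv (y \<otimes> a \<otimes> inv y)" using ac y by (simp add: inv_mult_group m_assoc)
      moreover have "y \<otimes> a \<otimes> inv y \<in> ?N" using a y unfolding T_def by auto
      ultimately show "y \<otimes> inv a \<otimes> inv y \<in> ?N" using subgroup.m_inv_closed[OF sub] by simp
    qed
  next
    fix a b assume a: "a \<in> T" and b: "b \<in> T"
    show "a \<otimes> b \<in> T" unfolding T_def
    proof (intro CollectI conjI ballI)
      have ac: "a \<in> carrier G" "b \<in> carrier G" using a b unfolding T_def by auto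
      then show "a \<otimes> b \<in> carrier G" by simp
      fix y assume y: "y \<in> carrier G"
      have "y \<otimes> (a \<otimes> b) \<otimes> inv y = (y \<otimes> a \<otimes> inv y) \<otimes> (y \<otimes> b \<otimes> inv y)"
        using ac y by (simp add: m_assoc inv_cancel_left3)
      moreover have "y \<otimes> a \<otimes> inv y \<in> ?N" "y \<otimes> b \<otimes> inv y \<in> ?N" using a b y unfolding T_def by auto
      ultimately show "y \<otimes> (a \<otimes> b) \<otimes> inv y \<in> ?N" using subgroup.m_closed[OF sub] by simp
    qed
  qed
  have ST: "?S \<subseteq> T"
  proof
    fix s assume "s \<in> ?S"
    then obtain x where x: "x \<in> carrier G" "s = gcomm G g x" by auto
    show "s \<in> T" unfolding T_def
    proof (intro CollectI conjI ballI)
      show "s \<in> carrier G" using x g gcomm_closed by simp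
      fix y assume y: "y \<in> carrier G"
      have "y \<otimes> s \<otimes> inv y = inv (gcomm G g (inv y)) \<otimes> gcomm G g (x \<otimes> inv y)"
        using gcomm_conj[OF g x(1) y] x by simp
      moreover have "gcomm G g (inv y) \<in> ?N" "gcomm G g (x \<otimes> inv y) \<in> ?N"
        unfolding elem_comm_def using x y by (auto intro: generate.incl)
      ultimately show "y \<otimes> s \<otimes> inv y \<in> ?N"
        using subgroup.m_inv_closed[OF sub] subgroup.m_closed[OF sub] by simp
    qed
  qed
  have "?N \<subseteq> T" unfolding elem_comm_def using generate_subgroup_incl[OF ST subT] .
  then show ?thesis unfolding normal_inv_iff using sub unfolding T_def by blast
qed

lemma upper_Z_char:
  assumes K: "normal K G" and g: "g \<in> carrier G"
  shows "g \<in> upper_Z G K \<longleftrightarrow> (\<forall>x\<in>carrier G. gcomm G g x \<in> K)"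
proof -
  have sub: "subgroup K G" using K normal_imp_subgroup by blast
  have Kc: "K \<subseteq> carrier G" using sub subgroup.subset by blast
  have conj: "\<And>c k. c \<in> carrier G \<Longrightarrow> k \<in> K \<Longrightarrow> c \<otimes> k \<otimes> inv c \<in> K"
    using K normal_inv_iff by blast
  have eqiff: "\<And>a b. a \<in> carrier G \<Longrightarrow> b \<in> carrier G \<Longrightarrow> K #> a = K #> b \<longleftrightarrow> a \<otimes> inv b \<in> K"
  proof
    fix a b assume a: "a \<in> carrier G" and b: "b \<in> carrier G"
    assume "K #> a = K #> b"
    then have "a \<in> K #> b" using rcos_self[OF a sub] by simp
    then show "a \<otimes> inv b \<in> K" using subgroup.rcos_module_imp[OF sub is_group b] by simp
  next
    fix a b assume a: "a \<in> carrier G" and b: "b \<in> carrier G"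
    assume "a \<otimes> inv b \<in> K"
    then have "a \<in> K #> b" using subgroup.rcos_module_rev[OF sub is_group b a] by simp
    then show "K #> a = K #> b" using repr_independence[OF _ b sub] by simp
  qed
  have key: "\<And>x. x \<in> carrier G \<Longrightarrow> (K #> g) <#> (K #> x) = (K #> x) <#> (K #> g) \<longleftrightarrow> gcomm G g x \<in> K"
  proof -
    fix x assume x: "x \<in> carrier G"
    have "(K #> g) <#> (K #> x) = (K #> x) <#> (K #> g) \<longleftrightarrow> K #> (g \<otimes> x) = K #> (x \<otimes> g)"
      using normal.rcos_sum[OF K g x] normal.rcos_sum[OF K x g] by simp
    also have "\<dots> \<longleftrightarrow> (g \<otimes> x) \<otimes> inv (x \<otimes> g) \<in> K" using eqiff g x by simp
    also have "\<dots> \<longleftrightarrow> gcomm G g x \<in> K"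
    proof
      assume k: "(g \<otimes> x) \<otimes> inv (x \<otimes> g) \<in> K"
      have "inv (x \<otimes> g) \<otimes> ((g \<otimes> x) \<otimes> inv (x \<otimes> g)) \<otimes> inv (inv (x \<otimes> g)) \<in> K"
        by (rule conj) (use g x k in auto)
      moreover have "inv (x \<otimes> g) \<otimes> ((g \<otimes> x) \<otimes> inv (x \<otimes> g)) \<otimes> inv (inv (x \<otimes> g)) = gcomm G g x"
        using g x by (simp add: gcomm_alt m_assoc)
      ultimately show "gcomm G g x \<in> K" by simp
    next
      assume k: "gcomm G g x \<in> K"
      have "(x \<otimes> g) \<otimes> gcomm G g x \<otimes> inv (x \<otimes> g) \<in> K" using conj[OF _ k] g x by simp
      moreover have "(x \<otimes> g) \<otimes> gcomm G g x \<otimes> inv (x \<otimes> g) = (g \<otimes> x) \<otimes> inv (x \<otimes> g)"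
        using g x by (simp add: gcomm_alt m_assoc inv_cancel_left2)
      ultimately show "(g \<otimes> x) \<otimes> inv (x \<otimes> g) \<in> K" by simp
    qed
    finally show "(K #> g) <#> (K #> x) = (K #> x) <#> (K #> g) \<longleftrightarrow> gcomm G g x \<in> K" .
  qed
  have "g \<in> upper_Z G K \<longleftrightarrow> (\<forall>Cs\<in>rcosets K. (K #> g) <#> Cs = Cs <#> (K #> g))"
    unfolding upper_Z_def grp_center_def FactGroup_def using g rcosetsI[OF Kc g] by simp
  also have "\<dots> \<longleftrightarrow> (\<forall>x\<in>carrier G. (K #> g) <#> (K #> x) = (K #> x) <#> (K #> g))"
    unfolding RCOSETS_def by auto
  also have "\<dots> \<longleftrightarrow> (\<forall>x\<in>carrier G. gcomm G g x \<in> K)" using key by simp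
  finally show ?thesis .
qed

end


lemma normal_Inter_family:
  fixes G (structure)
  assumes grp: "group G" and F: "\<forall>M\<in>F. normal M G"
  shows "normal (carrier G \<inter> \<Inter>F) G"
proof -
  interpret group G by fact
  have subM: "\<And>M. M \<in> F \<Longrightarrow> subgroup M G" using F normal_imp_subgroup by blast
  have conjM: "\<And>M c k. M \<in> F \<Longrightarrow> c \<in> carrier G \<Longrightarrow> k \<in> M \<Longrightarrow> c \<otimes> k \<otimes> inv c \<in> M"
    using F normal_inv_iff by blast
  have sub: "subgroup (carrier G \<inter> \<Inter>F) G"
  proof (rule subgroupI)
    show "carrier G \<inter> \<Inter>F \<noteq> {}" using subM subgroup.one_closed by blast
  next
    fix a assume a: "a \<in> carrier G \<inter> \<Inter>F"
    then have "a \<in> carrier G" "\<And>M. M \<in> F \<Longrightarrow> a \<in> M" by auto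
    then show "inv a \<in> carrier G \<inter> \<Inter>F" using subgroup.m_inv_closed[OF subM] by auto
  next
    fix a b assume a: "a \<in> carrier G \<inter> \<Inter>F" and b: "b \<in> carrier G \<inter> \<Inter>F"
    then have "a \<in> carrier G" "\<And>M. M \<in> F \<Longrightarrow> a \<in> M" "b \<in> carrier G" "\<And>M. M \<in> F \<Longrightarrow> b \<in> M" by auto
    then show "a \<otimes> b \<in> carrier G \<inter> \<Inter>F" using subgroup.m_closed[OF subM] by auto
  qed auto
  show ?thesis unfolding normal_inv_iff using sub conjM by auto
qed

lemma K_normal:
  fixes G (structure)
  assumes grp: "group G" and fin: "finite (carrier G)" and nonab: "grp_center G \<noteq> carrier G"
  shows "normal (K_grp G) G"
proof -
  interpret group G by fact
  let ?F = "{char_ker G \<chi> | \<chi>. \<chi> \<in> Irr G \<and> grp_center G \<subset> char_center G \<chi>}"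
  have K: "K_grp G = carrier G \<inter> \<Inter>?F" unfolding K_grp_def using nonab by simp
  have "\<forall>M\<in>?F. normal M G"
  proof
    fix M assume "M \<in> ?F"
    then obtain \<chi> where "M = char_ker G \<chi>" "\<chi> \<in> Irr G" by blast
    then obtain n \<rho> where M: "M = char_ker G (rep_char G n \<rho>)" and irr: "irr_rep G n \<rho>"
      unfolding Irr_def by blast
    have r: "is_rep G n \<rho>" using irr unfolding irr_rep_def by simp
    show "normal M G" unfolding M rep_char_ker[OF grp fin r] using rep_kernel_normal[OF grp r] .
  qed
  then show ?thesis unfolding K using normal_Inter_family[OF grp] by blast
qed

lemma key_K_sub:
  fixes G (structure)
  assumes grp: "group G" and fin: "finite (carrier G)" and nonab: "grp_center G \<noteq> carrier G"
    and g: "g \<in> carrier G" and gZ: "g \<notin> grp_center G"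
  shows "K_grp G \<subseteq> elem_comm G g"
proof
  interpret group G by fact
  fix h assume hK: "h \<in> K_grp G"
  show "h \<in> elem_comm G g"
  proof (rule ccontr)
    assume hN: "h \<notin> elem_comm G g"
    let ?N = "elem_comm G g"
    have Nn: "normal ?N G" using elem_comm_normal[OF g] .
    have Nc: "?N \<subseteq> carrier G" using Nn normal_imp_subgroup subgroup.subset by blast
    have hc: "h \<in> carrier G" using hK unfolding K_grp_def by (auto split: if_splits)
    obtain d \<rho> where "is_rep G d \<rho>" "d > 0" "\<forall>n\<in>?N. \<rho> n = 1\<^sub>m d" "mtr (\<rho> h) \<noteq> of_nat d"
      using perm_rep[OF grp fin Nn hc hN] by blast
    then obtain d' \<rho>' where irr: "irr_rep G d' \<rho>'" and ker: "\<forall>n\<in>?N. \<rho>' n = 1\<^sub>m d'"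
      and tr: "mtr (\<rho>' h) \<noteq> of_nat d'"
      using irr_exists[OF Nc hc] by blast
    have r: "is_rep G d' \<rho>'" using irr unfolding irr_rep_def by simp
    let ?\<chi> = "rep_char G d' \<rho>'"
    have chiIrr: "?\<chi> \<in> Irr G" unfolding Irr_def using irr by blast
    have Zsub: "grp_center G \<subseteq> char_center G ?\<chi>"
    proof
      fix z assume z: "z \<in> grp_center G"
      have zc: "z \<in> carrier G" using z unfolding grp_center_def by simp
      show "z \<in> char_center G ?\<chi>"
      proof (rule schur_center[OF grp fin irr zc], intro ballI)
        fix x assume x: "x \<in> carrier G"
        have "\<rho>' z * \<rho>' x = \<rho>' (z \<otimes> x)" using is_rep_mult[OF r zc x] by simp
        also have "z \<otimes> x = x \<otimes> z" using z x unfolding grp_center_def by simp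
        also have "\<rho>' (x \<otimes> z) = \<rho>' x * \<rho>' z" using is_rep_mult[OF r x zc] .
        finally show "\<rho>' z * \<rho>' x = \<rho>' x * \<rho>' z" .
      qed
    qed
    have gchi: "g \<in> char_center G ?\<chi>"
    proof (rule schur_center[OF grp fin irr g], intro ballI)
      fix x assume x: "x \<in> carrier G"
      have cN: "gcomm G g x \<in> ?N" unfolding elem_comm_def using x by (auto intro: generate.incl)
      have cc: "gcomm G g x \<in> carrier G" using gcomm_closed g x by simp
      have e: "g \<otimes> x = x \<otimes> g \<otimes> gcomm G g x"
        using g x unfolding gcomm_def by (simp add: m_assoc inv_cancel_left2)
      have "\<rho>' g * \<rho>' x = \<rho>' (g \<otimes> x)" using is_rep_mult[OF r g x] by simp
      also have "\<dots> = \<rho>' (x \<otimes> g) * \<rho>' (gcomm G g x)" unfolding e using is_rep_mult[OF r _ cc] x g by simp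
      also have "\<dots> = \<rho>' (x \<otimes> g)" using ker cN is_rep_carrier[OF r, of "x \<otimes> g"] x g by simp
      also have "\<dots> = \<rho>' x * \<rho>' g" using is_rep_mult[OF r x g] .
      finally show "\<rho>' g * \<rho>' x = \<rho>' x * \<rho>' g" .
    qed
    have "grp_center G \<subset> char_center G ?\<chi>" using Zsub gchi gZ by blast
    then have "char_ker G ?\<chi> \<in> {char_ker G \<chi> | \<chi>. \<chi> \<in> Irr G \<and> grp_center G \<subset> char_center G \<chi>}"
      using chiIrr by blast
    then have "h \<in> char_ker G ?\<chi>" using hK nonab unfolding K_grp_def by auto
    then have "?\<chi> h = ?\<chi> \<one>" unfolding char_ker_def by simp
    then have "mtr (\<rho>' h) = of_nat d'" using rep_char_mtr[OF hc r] rep_char_one[OF grp r] by simp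
    then show False using tr by simp
  qed
qed

lemma main_structured:
  fixes G (structure)
  assumes grp: "group G" and fin: "finite (carrier G)"
    and K1: "K_grp G \<noteq> {\<one>}"
    and Z2: "grp_center G \<subset> upper_Z G (grp_center G)"
  shows "(grp_center G \<subset> upper_Z G (K_grp G) \<longleftrightarrow> (\<exists>g \<in> carrier G. elem_comm G g = K_grp G))
       \<and> (grp_center G \<subset> upper_Z G (K_grp G) \<longleftrightarrow> K_grp G = set_comm G (upper_Z G (K_grp G)))"
proof -
  interpret group G by fact
  let ?Z = "grp_center G"
  let ?K = "K_grp G"
  let ?ZK = "upper_Z G ?K"
  have Zc: "?Z \<subseteq> carrier G" unfolding grp_center_def by auto
  have nonab: "?Z \<noteq> carrier G"
  proof
    assume "?Z = carrier G"
    moreover have "upper_Z G ?Z \<subseteq> carrier G" unfolding upper_Z_def by auto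
    ultimately show False using Z2 by auto
  qed
  have Kn: "normal ?K G" using K_normal[OF grp fin nonab] .
  have Ksub: "subgroup ?K G" using Kn normal_imp_subgroup by blast
  have K1in: "\<one> \<in> ?K" using subgroup.one_closed[OF Ksub] .
  have ZKc: "\<And>g. g \<in> ?ZK \<longleftrightarrow> g \<in> carrier G \<and> (\<forall>x\<in>carrier G. gcomm G g x \<in> ?K)"
    using upper_Z_char[OF Kn] unfolding upper_Z_def by blast
  have ZZK: "?Z \<subseteq> ?ZK" using ZKc center_gcomm K1in Zc by auto
  have trivgen: "\<And>S. S \<subseteq> {\<one>} \<Longrightarrow> generate G S \<subseteq> {\<one>}"
    using generate_subgroup_incl triv_subgroup by blast
  have c1: "?Z \<subset> ?ZK \<longleftrightarrow> (\<exists>g\<in>?ZK. g \<notin> ?Z)" using ZZK by auto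
  have ec_sub: "\<And>g. g \<in> ?ZK \<Longrightarrow> elem_comm G g \<subseteq> ?K"
    unfolding elem_comm_def using ZKc by (intro generate_subgroup_incl[OF _ Ksub]) auto
  have A: "(\<exists>g\<in>?ZK. g \<notin> ?Z) \<Longrightarrow> \<exists>g\<in>carrier G. elem_comm G g = ?K \<and> g \<in> ?ZK"
  proof -
    assume "\<exists>g\<in>?ZK. g \<notin> ?Z"
    then obtain g where g: "g \<in> ?ZK" "g \<notin> ?Z" by blast
    have gc: "g \<in> carrier G" using g ZKc by blast
    have "elem_comm G g = ?K" using ec_sub[OF g(1)] key_K_sub[OF grp fin nonab gc g(2)] by blast
    then show ?thesis using gc g by blast
  qed
  have B: "(\<exists>g\<in>carrier G. elem_comm G g = ?K) \<Longrightarrow> (\<exists>g\<in>?ZK. g \<notin> ?Z)"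
  proof -
    assume "\<exists>g\<in>carrier G. elem_comm G g = ?K"
    then obtain g where g: "g \<in> carrier G" "elem_comm G g = ?K" by blast
    have "\<forall>x\<in>carrier G. gcomm G g x \<in> ?K"
      using g unfolding elem_comm_def by (auto intro: generate.incl)
    then have gZK: "g \<in> ?ZK" using ZKc g by blast
    have "g \<notin> ?Z"
    proof
      assume "g \<in> ?Z"
      then have "{gcomm G g x | x. x \<in> carrier G} \<subseteq> {\<one>}" using center_gcomm by auto
      then have "elem_comm G g \<subseteq> {\<one>}" unfolding elem_comm_def by (rule trivgen)
      then have "?K \<subseteq> {\<one>}" using g(2) by simp
      then show False using K1 K1in by auto
    qed
    then show ?thesis using gZK by blast
  qed
  have C: "(\<exists>g\<in>?ZK. g \<notin> ?Z) \<Longrightarrow> ?K = set_comm G ?ZK"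
  proof -
    assume h: "\<exists>g\<in>?ZK. g \<notin> ?Z"
    then obtain g where g: "g \<in> carrier G" "elem_comm G g = ?K" "g \<in> ?ZK" using A by blast
    have "elem_comm G g \<subseteq> set_comm G ?ZK"
      unfolding elem_comm_def set_comm_def using g(3) by (intro mono_generate) blast
    moreover have "set_comm G ?ZK \<subseteq> ?K"
      unfolding set_comm_def using ZKc by (intro generate_subgroup_incl[OF _ Ksub]) auto
    ultimately show ?thesis using g(2) by blast
  qed
  have D: "?K = set_comm G ?ZK \<Longrightarrow> (\<exists>g\<in>?ZK. g \<notin> ?Z)"
  proof (rule ccontr)
    assume e: "?K = set_comm G ?ZK" and n: "\<not> (\<exists>g\<in>?ZK. g \<notin> ?Z)"
    then have "?ZK \<subseteq> ?Z" by blast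
    then have "{gcomm G h x | h x. h \<in> ?ZK \<and> x \<in> carrier G} \<subseteq> {\<one>}" using center_gcomm by blast
    then have "set_comm G ?ZK \<subseteq> {\<one>}" unfolding set_comm_def by (rule trivgen)
    then have "?K \<subseteq> {\<one>}" using e by simp
    then show False using K1 K1in by auto
  qed
  have e1: "?Z \<subset> ?ZK \<longleftrightarrow> (\<exists>g\<in>carrier G. elem_comm G g = ?K)"
  proof
    assume "?Z \<subset> ?ZK"
    then have "\<exists>g\<in>?ZK. g \<notin> ?Z" using c1 by simp
    then obtain g where "g \<in> carrier G" "elem_comm G g = ?K" using A by blast
    then show "\<exists>g\<in>carrier G. elem_comm G g = ?K" by blast
  next
    assume "\<exists>g\<in>carrier G. elem_comm G g = ?K"
    then show "?Z \<subset> ?ZK" using B c1 by simp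
  qed
  have e2: "?Z \<subset> ?ZK \<longleftrightarrow> ?K = set_comm G ?ZK"
  proof
    assume "?Z \<subset> ?ZK"
    then show "?K = set_comm G ?ZK" using c1 C by simp
  next
    assume "?K = set_comm G ?ZK"
    then show "?Z \<subset> ?ZK" using D c1 by simp
  qed
  show ?thesis using e1 e2 by (rule conjI)
qed

theorem lemma3p6:
  fixes G :: "('g, 'b) monoid_scheme"
  assumes "group G" and "finite (carrier G)"
    and "K_grp G \<noteq> {\<one>\<^bsub>G\<^esub>}"
    and "grp_center G \<subset> upper_Z G (grp_center G)"
  shows "(grp_center G \<subset> upper_Z G (K_grp G) \<longleftrightarrow> (\<exists>g \<in> carrier G. elem_comm G g = K_grp G))
       \<and> (grp_center G \<subset> upper_Z G (K_grp G) \<longleftrightarrow> K_grp G = set_comm G (upper_Z G (K_grp G)))"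
  using main_structured[OF assms] .

end
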